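(* Let $(X,d_X)$ be a complete metric space. Let $\mathfrak{A}=\{A(t)\}_{t\in\mathbb{R}}$ be the pullback attractor of a process $U$ on $X$ and $\mathcal{A}$ the global attractor of a semigroup $S$ on $X$. Suppose that (i) for every family $\{x_t\}\subset X$ and $x_0\in X$ with $\lim_{t\to-\infty}d_X(x_t,x_0)=0$, $$\lim_{t\to-\infty} d_X\big(U(t,t-T,x_t),S(T,x_0)\big)=0\quad\text{for all } T>0;$$ (ii) $\mathfrak{A}$ is backwards compact, i.e. there is a compact set $K\subset X$ with $\bigcup_{t\leq 0}A(t)\subset K$. Then $\lim_{t\to-\infty}\operatorname{dist}\big(A(t),\mathcal{A}\big)=0$.
   Context: A process on $X$ is a map $U:\{(t,\tau)\in\mathbb{R}^2:t\geq\tau\}\times X\to X$ with $U(\tau,\tau,x)=x$ and $U(t,s,U(s,\tau,x))=U(t,\tau,x)$ for all $t\geq s\geq\tau$, $x\in X$ (no continuity is assumed). A pullback attractor of $U$ is a family $\mathfrak{A}=\{A(t)\}_{t\in\mathbb{R}}$ of nonempty compact subsets of $X$ which is invariant ($U(t,\tau,A(\tau))=A(t)$ for all $t\geq\tau$), pullback attracts every nonempty bounded set $D\subset X$ (i.e. $\lim_{s\to\infty}\operatorname{dist}(U(t,t-s,D),A(t))=0$ for every $t\in\mathbb{R}$), and is minimal among families with these properties. A semigroup on $X$ is a map $S:[0,\infty)\times X\to X$ with $S(0,x)=x$ and $S(t+s,x)=S(t,S(s,x))$; its global attractor $\mathcal{A}$ is a nonempty compact set with $S(t,\mathcal{A})=\mathcal{A}$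 for all $t\geq0$ that attracts every bounded set $D$: $\lim_{t\to\infty}\operatorname{dist}(S(t,D),\mathcal{A})=0$. Here $\operatorname{dist}(A,B)=\sup_{a\in A}\inf_{b\in B}d_X(a,b)$ is the Hausdorff semi-metric. *)

theory Defs
  imports "HOL-Analysis.Analysis" "HOL-Library.Extended_Real"
begin

text \<open>Hausdorff semi-distance dist(A,B) = sup over a in A of inf over b in B of d(a,b),
  valued in the extended reals so that unbounded sets give infinity.\<close>
definition hsemidist :: "'a::metric_space set \<Rightarrow> 'a set \<Rightarrow> ereal" where
  "hsemidist A B = (SUP a\<in>A. ereal (infdist a B))"

definition is_process :: "(real \<Rightarrow> real \<Rightarrow> 'a \<Rightarrow> 'a) \<Rightarrow> bool" where
  "is_process U \<longleftrightarrow> (\<forall>\<tau> x. U \<tau> \<tau> x = x) \<and>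
     (\<forall>t s \<tau> x. t \<ge> s \<and> s \<ge> \<tau> \<longrightarrow> U t s (U s \<tau> x) = U t \<tau> x)"

definition is_semigroup :: "(real \<Rightarrow> 'a \<Rightarrow> 'a) \<Rightarrow> bool" where
  "is_semigroup S \<longleftrightarrow> (\<forall>x. S 0 x = x) \<and>
     (\<forall>t s x. t \<ge> 0 \<and> s \<ge> 0 \<longrightarrow> S (t + s) x = S t (S s x))"

definition pullback_attracting_family ::
    "(real \<Rightarrow> real \<Rightarrow> 'a::metric_space \<Rightarrow> 'a) \<Rightarrow> (real \<Rightarrow> 'a set) \<Rightarrow> bool" where
  "pullback_attracting_family U A \<longleftrightarrow>
     (\<forall>t. A t \<noteq> {} \<and> compact (A t)) \<and>
     (\<forall>t \<tau>. t \<ge> \<tau> \<longrightarrow> U t \<tau> ` A \<tau> = A t) \<and>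
     (\<forall>D t. D \<noteq> {} \<and> bounded D \<longrightarrow>
        ((\<lambda>s. hsemidist (U t (t - s) ` D) (A t)) \<longlongrightarrow> 0) at_top)"

definition pullback_attractor ::
    "(real \<Rightarrow> real \<Rightarrow> 'a::metric_space \<Rightarrow> 'a) \<Rightarrow> (real \<Rightarrow> 'a set) \<Rightarrow> bool" where
  "pullback_attractor U A \<longleftrightarrow> is_process U \<and> pullback_attracting_family U A \<and>
     (\<forall>B. pullback_attracting_family U B \<and> (\<forall>t. B t \<subseteq> A t) \<longrightarrow> B = A)"

definition global_attractor ::
    "(real \<Rightarrow> 'a::metric_space \<Rightarrow> 'a) \<Rightarrow> 'a set \<Rightarrow> bool" where
  "global_attractor S AA \<longleftrightarrow> is_semigroup S \<and> AA \<noteq> {} \<and> compact AA \<and>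
     (\<forall>t\<ge>0. S t ` AA = AA) \<and>
     (\<forall>D. D \<noteq> {} \<and> bounded D \<longrightarrow> ((\<lambda>t. hsemidist (S t ` D) AA) \<longlongrightarrow> 0) at_top)"

end

theory Submission
  imports Defs
begin

theorem theorem2p3:
  fixes U :: "real \<Rightarrow> real \<Rightarrow> 'a::complete_space \<Rightarrow> 'a"
    and S :: "real \<Rightarrow> 'a \<Rightarrow> 'a"
    and A :: "real \<Rightarrow> 'a set"
    and AA :: "'a set"
  assumes "pullback_attractor U A"
    and "global_attractor S AA"
    and "\<And>xt x0 T. (xt \<longlongrightarrow> x0) at_bot \<Longrightarrow> T > 0 \<Longrightarrow>
           ((\<lambda>t. U t (t - T) (xt t)) \<longlongrightarrow> S T x0) at_bot"
    and "\<exists>K. compact K \<and> (\<Union>t\<in>{..0}. A t) \<subseteq> K"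
  shows "((\<lambda>t. hsemidist (A t) AA) \<longlongrightarrow> 0) at_bot"
proof -
  have ne: "\<And>t. A t \<noteq> {}" and inv: "\<And>t \<tau>. t \<ge> \<tau> \<Longrightarrow> U t \<tau> ` A \<tau> = A t"
    using assms(1) unfolding pullback_attractor_def pullback_attracting_family_def by auto
  have gattr: "\<And>D. D \<noteq> {} \<Longrightarrow> bounded D \<Longrightarrow> ((\<lambda>t. hsemidist (S t ` D) AA) \<longlongrightarrow> 0) at_top"
    using assms(2) unfolding global_attractor_def by auto
  obtain K where K: "compact K" "\<And>t x. t \<le> 0 \<Longrightarrow> x \<in> A t \<Longrightarrow> x \<in> K"
    using assms(4) by auto
  have main: "eventually (\<lambda>t. \<forall>x\<in>A t. infdist x AA < e) at_bot" if e: "e > 0" for e :: real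
  proof (rule ccontr)
    assume "\<not> ?thesis"
    then have freq: "\<forall>M. \<exists>t\<le>M. \<exists>x\<in>A t. infdist x AA \<ge> e"
      by (auto simp: eventually_at_bot_linorder not_less)
    have Kne: "K \<noteq> {}" using ne[of 0] K(2)[of 0] by blast
    have "eventually (\<lambda>t. hsemidist (S t ` K) AA < ereal (e/2)) at_top"
      using gattr[OF Kne compact_imp_bounded[OF K(1)]] e
      by (intro order_tendstoD(2)) auto
    then obtain N where N: "\<And>t. t \<ge> N \<Longrightarrow> hsemidist (S t ` K) AA < ereal (e/2)"
      by (auto simp: eventually_at_top_linorder)
    define T where "T = max N 1"
    have T: "T > 0" "hsemidist (S T ` K) AA < ereal (e/2)" using N unfolding T_def by auto
    have hT: "infdist (S T b) AA < e/2" if "b \<in> K" for b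
    proof -
      have "ereal (infdist (S T b) AA) \<le> hsemidist (S T ` K) AA"
        unfolding hsemidist_def using that by (intro SUP_upper) auto
      then have "ereal (infdist (S T b) AA) < ereal (e/2)" using T(2) by (rule le_less_trans)
      then show ?thesis by simp
    qed
    define f where "f M = (SOME t. t \<le> M \<and> (\<exists>x\<in>A t. infdist x AA \<ge> e))" for M
    have f: "f M \<le> M \<and> (\<exists>x\<in>A (f M). infdist x AA \<ge> e)" for M
      unfolding f_def using someI_ex[OF freq[rule_format, of M]] by simp
    define tt where "tt = rec_nat (f 0) (\<lambda>n p. f (min (p - 1) (- real (Suc n))))"
    have tt0: "tt 0 = f 0" and ttS: "tt (Suc n) = f (min (tt n - 1) (- real (Suc n)))" for n
      unfolding tt_def by simp_all
    have ttle: "tt n \<le> - real n" for n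
    proof (cases n)
      case 0 then show ?thesis using f[of 0] by (simp add: tt0)
    next
      case (Suc m)
      have "f (min (tt m - 1) (- real (Suc m))) \<le> min (tt m - 1) (- real (Suc m))" using f by blast
      then show ?thesis using Suc by (simp add: ttS)
    qed
    have ttdec: "tt (Suc n) < tt n" for n
      using f[of "min (tt n - 1) (- real (Suc n))"] by (auto simp: ttS)
    have ttP: "\<exists>x\<in>A (tt n). infdist x AA \<ge> e" for n
      using f by (cases n) (auto simp: tt0 ttS)
    obtain a where a: "\<And>n. a n \<in> A (tt n) \<and> infdist (a n) AA \<ge> e"
      using ttP by metis
    have "\<exists>b\<in>A (tt n - T). U (tt n) (tt n - T) b = a n" for n
      using inv[of "tt n - T" "tt n"] a[of n] T(1) by force
    then obtain b where b: "\<And>n. b n \<in> A (tt n - T) \<and> U (tt n) (tt n - T) (b n) = a n"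
      by metis
    have bK: "b n \<in> K" for n
    proof -
      have "tt n - T \<le> 0" using ttle[of n] T(1) by simp
      then show ?thesis using K(2) b by blast
    qed
    obtain l r where l: "l \<in> K" "strict_mono r" "(b \<circ> r) \<longlonglongrightarrow> l"
      using K(1) bK unfolding compact_def by meson
    define s where "s n = tt (r n)" for n
    have "strict_mono (\<lambda>n. - tt n)"
      unfolding strict_mono_Suc_iff using ttdec by simp
    then have smono: "strict_mono (\<lambda>n. - s n)"
      using l(2) unfolding s_def strict_mono_def by auto
    have sinj: "inj s"
    proof
      fix x y assume "s x = s y"
      then have "- s x = - s y" by simp
      then show "x = y" using strict_mono_eq[OF smono] by blast
    qed
    have sle: "s n \<le> - real n" for n
      using ttle[of "r n"] seq_suble[OF l(2), of n] unfolding s_def by simp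
    define xt where "xt t = (if t \<in> range s then b (r (inv s t)) else l)" for t
    have xts: "xt (s n) = b (r n)" for n
      unfolding xt_def using sinj by simp
    have "(xt \<longlongrightarrow> l) at_bot"
    proof (rule tendstoI)
      fix \<epsilon> :: real assume "\<epsilon> > 0"
      then obtain M where M: "\<And>n. n \<ge> M \<Longrightarrow> dist (b (r n)) l < \<epsilon>"
        using l(3) unfolding lim_sequentially by auto
      show "eventually (\<lambda>t. dist (xt t) l < \<epsilon>) at_bot"
        unfolding eventually_at_bot_linorder
      proof (intro exI allI impI)
        fix t assume t: "t \<le> s M"
        show "dist (xt t) l < \<epsilon>"
        proof (cases "t \<in> range s")
          case True
          then obtain m where m: "t = s m" by auto
          have "m \<ge> M"
          proof (rule ccontr)
            assume "\<not> M \<le> m"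
            then have "- s m < - s M" using smono unfolding strict_mono_def by auto
            then show False using t m by simp
          qed
          then show ?thesis using M m xts by simp
        next
          case False
          then show ?thesis using \<open>\<epsilon> > 0\<close> unfolding xt_def by simp
        qed
      qed
    qed
    from assms(3)[OF this T(1)]
    have lim1: "((\<lambda>t. U t (t - T) (xt t)) \<longlongrightarrow> S T l) at_bot" .
    have sbot: "filterlim s at_bot sequentially"
      unfolding filterlim_at_bot
    proof
      fix Z :: real
      obtain n0 :: nat where "real n0 \<ge> - Z" using real_arch_simple by blast
      then show "eventually (\<lambda>n. s n \<le> Z) sequentially"
        unfolding eventually_sequentially
        using sle by (intro exI[of _ n0] allI impI) (smt (verit) of_nat_mono)
    qed
    have "(\<lambda>n. U (s n) (s n - T) (xt (s n))) \<longlonglongrightarrow> S T l"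
      using filterlim_compose[OF lim1 sbot] by simp
    then have "(\<lambda>n. a (r n)) \<longlonglongrightarrow> S T l"
      using b unfolding s_def xts[unfolded s_def] by simp
    then have "(\<lambda>n. infdist (a (r n)) AA) \<longlonglongrightarrow> infdist (S T l) AA"
      by (rule tendsto_infdist)
    moreover have "infdist (S T l) AA < e/2" using hT l(1) by blast
    ultimately have "eventually (\<lambda>n. infdist (a (r n)) AA < e/2) sequentially"
      by (rule order_tendstoD(2))
    then obtain n where "infdist (a (r n)) AA < e/2"
      by (auto simp: eventually_sequentially)
    then show False using a[of "r n"] e by simp
  qed
  show ?thesis
  proof (rule order_tendstoI)
    fix y :: ereal assume "y < 0"
    show "eventually (\<lambda>t. y < hsemidist (A t) AA) at_bot"
    proof (rule always_eventually, rule allI)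
      fix t
      obtain x where "x \<in> A t" using ne by blast
      then have "ereal (infdist x AA) \<le> hsemidist (A t) AA"
        unfolding hsemidist_def by (intro SUP_upper) auto
      moreover have "0 \<le> infdist x AA" by (rule infdist_nonneg)
      ultimately show "y < hsemidist (A t) AA" using \<open>y < 0\<close>
        by (meson ereal_less_eq(5) le_less_trans order_trans not_le)
    qed
  next
    fix y :: ereal assume "0 < y"
    then obtain z where z: "0 < ereal z" "ereal z < y" using ereal_dense2 by blast
    have "eventually (\<lambda>t. \<forall>x\<in>A t. infdist x AA < z) at_bot"
      using main z(1) by simp
    then show "eventually (\<lambda>t. hsemidist (A t) AA < y) at_bot"
    proof (rule eventually_mono)
      fix t assume "\<forall>x\<in>A t. infdist x AA < z"
      then have "hsemidist (A t) AA \<le> ereal z"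
        unfolding hsemidist_def by (intro SUP_least) auto
      then show "hsemidist (A t) AA < y" using z(2) by simp
    qed
  qed
qed

end
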